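(* Suppose Assumptions 1 and 4 hold, and let $d^*=\max_iL_{ii}$ be the maximal degree of $\mathcal G$. Then $\bar{\mathfrak A}$ is maximally monotone, and $\bar{\mathfrak B}$ is $\beta_E$-cocoercive for every $\beta_E\in\big(0,\tfrac12\min\{\bar\chi,\tfrac1{2d^*}\}\big)$.
   Context: Game: players $i=1,\dots,N$, $x_i\in\Omega_i\subseteq\mathbb R^{n_i}$, $n=\sum n_i$, $\Omega=\prod\Omega_i$, costs $f_i(x_i,x_{-i})$ defined and $C^1$ in $x_i$ on $\mathbb R^n$, data $A_i\in\mathbb R^{m\times n_i}$, $b_i\in\mathbb R^m$, $X=\Omega\cap\{\sum A_ix_i=\sum b_i\}$. Assumption 1: each $\Omega_i$ closed convex with nonempty interior; $X$ and each $\{x_i\in\Omega_i:(x_i,x_{-i})\in X\}$ have nonempty relative interior; $f_i$ convex in $x_i$. Graph: connected undirected graph, $N$ nodes, $M$ arbitrarily oriented edges, incidence $V$ ($V_{il}=1$ if $e_l$ points to $i$, $-1$ if starts at $i$, $0$ else), $L=VV^T$; $\mathbf V=V\otimes I_m$, $\mathbf L=L\otimes I_n$, $\mathbf A=\mathrm{diag}(A_i)$, $\mathbf b=\mathrm{col}(b_i)$. $\mathbf x=\mathrm{col}(x^{(1)},\dots,x^{(N)})\in\mathbb R^{Nn}$; $\mathcal R_i=[0_{n_i\times n_{<i}}\ I_{n_i}\ 0_{n_i\times n_{>i}}]$, $\mathcal R=\mathrm{diag}(\mathcal R_1,\dots,\mathcal R_N)$; $\mathbf F(\mathbf x)=\mathrm{col}(\nabla_{x_i}f_i(x^{(i)}))_i$.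 Assumption 4: for all $\mathbf x,\mathbf x'\in\mathbb R^{Nn}$, $\langle\mathbf x-\mathbf x',\mathcal R^T\mathbf F(\mathbf x)-\mathcal R^T\mathbf F(\mathbf x')\rangle\ge\bar\chi\|\mathbf F(\mathbf x)-\mathbf F(\mathbf x')\|^2$ with $\bar\chi>0$. $\bar{\mathfrak A}(\mathbf W)=\mathrm{col}(-\mathbf V\mathbf z-\mathbf A\mathcal R\mathbf x,\ \mathbf V^T\Lambda,\ \mathcal R^TN_\Omega(\mathcal R\mathbf x)+\mathcal R^T\mathbf A^T\Lambda)$, $\bar{\mathfrak B}(\mathbf W)=\mathrm{col}(\mathbf b,\mathbf 0,\mathcal R^T\mathbf F(\mathbf x)+\mathbf L\mathbf x)$ for $\mathbf W=\mathrm{col}(\Lambda,\mathbf z,\mathbf x)\in\mathbb R^{Nm}\times\mathbb R^{Mm}\times\mathbb R^{Nn}$. $\beta$-cocoercive means $\langle u-v,Su-Sv\rangle\ge\beta\|Su-Sv\|^2$. *)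

theory Defs
  imports "HOL-Analysis.Analysis"
begin

text \<open>A vector of R^I (I a finite index set) is a real function that vanishes off I.
  All dimensions of the paper (n_i, n, Nn, Nm, Mm, ...) vary with the data, so we use
  explicit index sets instead of type-indexed dimensions.  The topology used below is
  the product topology on functions, which restricted to space I is the Euclidean one.\<close>

definition space :: "'a set \<Rightarrow> ('a \<Rightarrow> real) set" where
  "space I = {u. \<forall>k. k \<notin> I \<longrightarrow> u k = 0}"

definition ip :: "'a set \<Rightarrow> ('a \<Rightarrow> real) \<Rightarrow> ('a \<Rightarrow> real) \<Rightarrow> real" where
  "ip I u v = (\<Sum>k\<in>I. u k * v k)"

definition vnorm :: "'a set \<Rightarrow> ('a \<Rightarrow> real) \<Rightarrow> real" where
  "vnorm I u = sqrt (ip I u u)"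

definition vsub :: "('a \<Rightarrow> real) \<Rightarrow> ('a \<Rightarrow> real) \<Rightarrow> ('a \<Rightarrow> real)" where
  "vsub u v = (\<lambda>k. u k - v k)"

definition convex_set :: "'a set \<Rightarrow> ('a \<Rightarrow> real) set \<Rightarrow> bool" where
  "convex_set I C \<longleftrightarrow> C \<subseteq> space I \<and>
     (\<forall>x\<in>C. \<forall>y\<in>C. \<forall>t::real. 0 \<le> t \<and> t \<le> 1 \<longrightarrow> (\<lambda>k. (1 - t) * x k + t * y k) \<in> C)"

definition ahull :: "('a \<Rightarrow> real) set \<Rightarrow> ('a \<Rightarrow> real) set" where
  "ahull S = {y. \<exists>F u. finite F \<and> F \<noteq> {} \<and> F \<subseteq> S \<and> sum u F = 1 \<and>
                      y = (\<lambda>k. \<Sum>x\<in>F. u x * x k)}"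

definition nonempty_interior_in :: "'a set \<Rightarrow> ('a \<Rightarrow> real) set \<Rightarrow> bool" where
  "nonempty_interior_in I S \<longleftrightarrow>
     (\<exists>U. openin (top_of_set (space I)) U \<and> U \<noteq> {} \<and> U \<subseteq> S)"

definition nonempty_rel_interior :: "('a \<Rightarrow> real) set \<Rightarrow> bool" where
  "nonempty_rel_interior S \<longleftrightarrow>
     (\<exists>U. openin (top_of_set (ahull S)) U \<and> U \<noteq> {} \<and> U \<subseteq> S)"

definition normal_cone :: "'a set \<Rightarrow> ('a \<Rightarrow> real) set \<Rightarrow> ('a \<Rightarrow> real) \<Rightarrow> ('a \<Rightarrow> real) set" where
  "normal_cone I C y = (if y \<in> C then {v \<in> space I. \<forall>y'\<in>C. ip I v (vsub y' y) \<le> 0} else {})"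

definition has_grad :: "'a set \<Rightarrow> (('a \<Rightarrow> real) \<Rightarrow> real) \<Rightarrow> ('a \<Rightarrow> real) \<Rightarrow> ('a \<Rightarrow> real) \<Rightarrow> bool" where
  "has_grad I \<phi> y gv \<longleftrightarrow> gv \<in> space I \<and>
     (\<forall>\<epsilon>>0. \<exists>\<delta>>0. \<forall>h\<in>space I. vnorm I h < \<delta> \<longrightarrow>
        \<bar>\<phi> (\<lambda>k. y k + h k) - \<phi> y - ip I gv h\<bar> \<le> \<epsilon> * vnorm I h)"

definition monotone_op :: "'a set \<Rightarrow> (('a \<Rightarrow> real) \<Rightarrow> ('a \<Rightarrow> real) set) \<Rightarrow> bool" where
  "monotone_op I A \<longleftrightarrow> (\<forall>u\<in>space I. \<forall>v\<in>space I. \<forall>a\<in>A u. \<forall>b\<in>A v.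
       ip I (vsub u v) (vsub a b) \<ge> 0)"

definition maximally_monotone :: "'a set \<Rightarrow> (('a \<Rightarrow> real) \<Rightarrow> ('a \<Rightarrow> real) set) \<Rightarrow> bool" where
  "maximally_monotone I A \<longleftrightarrow>
     (\<forall>u\<in>space I. A u \<subseteq> space I) \<and> monotone_op I A \<and>
     (\<forall>u\<in>space I. \<forall>a\<in>space I.
        (\<forall>v\<in>space I. \<forall>b\<in>A v. ip I (vsub u v) (vsub a b) \<ge> 0) \<longrightarrow> a \<in> A u)"

definition cocoercive :: "'a set \<Rightarrow> (('a \<Rightarrow> real) \<Rightarrow> ('a \<Rightarrow> real)) \<Rightarrow> real \<Rightarrow> bool" where
  "cocoercive I S \<beta> \<longleftrightarrow> (\<forall>u\<in>space I. \<forall>v\<in>space I.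
       ip I (vsub u v) (vsub (S u) (S v)) \<ge> \<beta> * ip I (vsub (S u) (S v)) (vsub (S u) (S v)))"

text \<open>Players are 0..N-1; player i's decision x_i lives in R^{n i} (indices k < n i).
  A profile x in R^n is a function on PI = {(i,k). i < N, k < n i}.
  A stacked estimate vector bold-x in R^{Nn} is a function on XI = {(j,i,k)},
  with x^(j) = est xx j.\<close>

definition PI :: "nat \<Rightarrow> (nat \<Rightarrow> nat) \<Rightarrow> (nat \<times> nat) set" where
  "PI N n = {(i, k). i < N \<and> k < n i}"

definition XI :: "nat \<Rightarrow> (nat \<Rightarrow> nat) \<Rightarrow> (nat \<times> nat \<times> nat) set" where
  "XI N n = {(j, i, k). j < N \<and> i < N \<and> k < n i}"

definition blk :: "nat \<Rightarrow> (nat \<times> nat \<Rightarrow> real) \<Rightarrow> (nat \<Rightarrow> real)" where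
  "blk i x = (\<lambda>k. x (i, k))"

definition upd :: "nat \<Rightarrow> (nat \<Rightarrow> real) \<Rightarrow> (nat \<times> nat \<Rightarrow> real) \<Rightarrow> (nat \<times> nat \<Rightarrow> real)" where
  "upd i y x = (\<lambda>(j, k). if j = i then y k else x (j, k))"

definition est :: "(nat \<times> nat \<times> nat \<Rightarrow> real) \<Rightarrow> nat \<Rightarrow> (nat \<times> nat \<Rightarrow> real)" where
  "est xx j = (\<lambda>(i, k). xx (j, i, k))"

definition OmegaP :: "nat \<Rightarrow> (nat \<Rightarrow> nat) \<Rightarrow> (nat \<Rightarrow> (nat \<Rightarrow> real) set) \<Rightarrow> (nat \<times> nat \<Rightarrow> real) set" where
  "OmegaP N n \<Omega> = {x \<in> space (PI N n). \<forall>i<N. blk i x \<in> \<Omega> i}"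

text \<open>X = Omega intersected with {sum_i A_i x_i = sum_i b_i}; A i r k is entry (r,k) of A_i,
  b i r is entry r of b_i.\<close>
definition Xset :: "nat \<Rightarrow> (nat \<Rightarrow> nat) \<Rightarrow> nat \<Rightarrow> (nat \<Rightarrow> (nat \<Rightarrow> real) set)
     \<Rightarrow> (nat \<Rightarrow> nat \<Rightarrow> nat \<Rightarrow> real) \<Rightarrow> (nat \<Rightarrow> nat \<Rightarrow> real) \<Rightarrow> (nat \<times> nat \<Rightarrow> real) set" where
  "Xset N n m \<Omega> A b = {x \<in> OmegaP N n \<Omega>. \<forall>r<m.
      (\<Sum>i<N. \<Sum>k<n i. A i r k * x (i, k)) = (\<Sum>i<N. b i r)}"

definition assumption1 :: "nat \<Rightarrow> (nat \<Rightarrow> nat) \<Rightarrow> nat \<Rightarrow> (nat \<Rightarrow> (nat \<Rightarrow> real) set)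
     \<Rightarrow> (nat \<Rightarrow> nat \<Rightarrow> nat \<Rightarrow> real) \<Rightarrow> (nat \<Rightarrow> nat \<Rightarrow> real)
     \<Rightarrow> (nat \<Rightarrow> (nat \<times> nat \<Rightarrow> real) \<Rightarrow> real) \<Rightarrow> bool" where
  "assumption1 N n m \<Omega> A b f \<longleftrightarrow>
     (\<forall>i<N. \<Omega> i \<subseteq> space {..<n i} \<and> closed (\<Omega> i) \<and> convex_set {..<n i} (\<Omega> i)
            \<and> nonempty_interior_in {..<n i} (\<Omega> i))
   \<and> nonempty_rel_interior (Xset N n m \<Omega> A b)
   \<and> (\<forall>i<N. \<forall>x\<in>space (PI N n).
        let S = {y \<in> \<Omega> i. upd i y x \<in> Xset N n m \<Omega> A b} in S \<noteq> {} \<longrightarrow> nonempty_rel_interior S)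
   \<and> (\<forall>i<N. \<forall>x\<in>space (PI N n). \<forall>y\<in>space {..<n i}. \<forall>y'\<in>space {..<n i}. \<forall>t::real.
        0 \<le> t \<and> t \<le> 1 \<longrightarrow>
        f i (upd i (\<lambda>k. (1 - t) * y k + t * y' k) x)
          \<le> (1 - t) * f i (upd i y x) + t * f i (upd i y' x))"

text \<open>g i x = nabla_{x_i} f_i(x): f_i is C^1 in x_i on all of R^n with this partial gradient.\<close>
definition partial_gradients :: "nat \<Rightarrow> (nat \<Rightarrow> nat) \<Rightarrow> (nat \<Rightarrow> (nat \<times> nat \<Rightarrow> real) \<Rightarrow> real)
     \<Rightarrow> (nat \<Rightarrow> (nat \<times> nat \<Rightarrow> real) \<Rightarrow> (nat \<Rightarrow> real)) \<Rightarrow> bool" where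
  "partial_gradients N n f g \<longleftrightarrow>
     (\<forall>i<N. \<forall>x\<in>space (PI N n).
        (\<forall>y\<in>space {..<n i}. has_grad {..<n i} (\<lambda>y'. f i (upd i y' x)) y (g i (upd i y x)))
      \<and> continuous_on (space {..<n i}) (\<lambda>y. g i (upd i y x)))"

text \<open>F(bold x) = col(nabla_{x_i} f_i(x^(i)))_i, an element of R^n, and R^T.\<close>
definition FF :: "nat \<Rightarrow> (nat \<Rightarrow> nat) \<Rightarrow> (nat \<Rightarrow> (nat \<times> nat \<Rightarrow> real) \<Rightarrow> (nat \<Rightarrow> real))
     \<Rightarrow> (nat \<times> nat \<times> nat \<Rightarrow> real) \<Rightarrow> (nat \<times> nat \<Rightarrow> real)" where
  "FF N n g xx = (\<lambda>(i, k). if i < N \<and> k < n i then g i (est xx i) k else 0)"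

definition RT :: "nat \<Rightarrow> (nat \<Rightarrow> nat) \<Rightarrow> (nat \<times> nat \<Rightarrow> real) \<Rightarrow> (nat \<times> nat \<times> nat \<Rightarrow> real)" where
  "RT N n v = (\<lambda>(j, i, k). if j < N \<and> i = j \<and> k < n j then v (j, k) else 0)"

definition assumption4 :: "nat \<Rightarrow> (nat \<Rightarrow> nat) \<Rightarrow> (nat \<Rightarrow> (nat \<times> nat \<Rightarrow> real) \<Rightarrow> (nat \<Rightarrow> real))
     \<Rightarrow> real \<Rightarrow> bool" where
  "assumption4 N n g chi \<longleftrightarrow> chi > 0 \<and>
     (\<forall>xx\<in>space (XI N n). \<forall>xx'\<in>space (XI N n).
        ip (XI N n) (vsub xx xx') (vsub (RT N n (FF N n g xx)) (RT N n (FF N n g xx')))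
          \<ge> chi * ip (PI N n) (vsub (FF N n g xx) (FF N n g xx')) (vsub (FF N n g xx) (FF N n g xx')))"

text \<open>Edge l (l < M) is oriented from etl l to ehd l.\<close>
definition graph_ok :: "nat \<Rightarrow> nat \<Rightarrow> (nat \<Rightarrow> nat) \<Rightarrow> (nat \<Rightarrow> nat) \<Rightarrow> bool" where
  "graph_ok N M etl ehd \<longleftrightarrow>
     (\<forall>l<M. etl l < N \<and> ehd l < N \<and> etl l \<noteq> ehd l)
   \<and> (\<forall>l<M. \<forall>l'<M. l \<noteq> l' \<longrightarrow> {etl l, ehd l} \<noteq> {etl l', ehd l'})
   \<and> (\<forall>i<N. \<forall>j<N. (i, j) \<in> ({(etl l, ehd l) | l. l < M} \<union> {(ehd l, etl l) | l. l < M})\<^sup>*)"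

definition Vinc :: "(nat \<Rightarrow> nat) \<Rightarrow> (nat \<Rightarrow> nat) \<Rightarrow> nat \<Rightarrow> nat \<Rightarrow> real" where
  "Vinc etl ehd i l = (if ehd l = i then 1 else if etl l = i then -1 else 0)"

definition Lap :: "nat \<Rightarrow> (nat \<Rightarrow> nat) \<Rightarrow> (nat \<Rightarrow> nat) \<Rightarrow> nat \<Rightarrow> nat \<Rightarrow> real" where
  "Lap M etl ehd i j = (\<Sum>l<M. Vinc etl ehd i l * Vinc etl ehd j l)"

definition dstar :: "nat \<Rightarrow> nat \<Rightarrow> (nat \<Rightarrow> nat) \<Rightarrow> (nat \<Rightarrow> nat) \<Rightarrow> real" where
  "dstar N M etl ehd = Max {Lap M etl ehd i i | i. i < N}"

text \<open>W = col(Lambda, z, bold x): Lam j r is entry r of lambda_j, Zed l r entry r of z_l,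
  Xe j i k entry k of block i of x^(j).\<close>
datatype widx = Lam nat nat | Zed nat nat | Xe nat nat nat

definition WI :: "nat \<Rightarrow> nat \<Rightarrow> (nat \<Rightarrow> nat) \<Rightarrow> nat \<Rightarrow> widx set" where
  "WI N M n m = {Lam j r | j r. j < N \<and> r < m} \<union> {Zed l r | l r. l < M \<and> r < m}
              \<union> {Xe j i k | j i k. j < N \<and> i < N \<and> k < n i}"

definition xpart :: "(widx \<Rightarrow> real) \<Rightarrow> (nat \<times> nat \<times> nat \<Rightarrow> real)" where
  "xpart W = (\<lambda>(j, i, k). W (Xe j i k))"

text \<open>R bold x = col(x^(j)_j) in R^n.\<close>
definition Rx :: "nat \<Rightarrow> (nat \<Rightarrow> nat) \<Rightarrow> (widx \<Rightarrow> real) \<Rightarrow> (nat \<times> nat \<Rightarrow> real)" where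
  "Rx N n W = (\<lambda>(j, k). if j < N \<and> k < n j then W (Xe j j k) else 0)"

definition Abar :: "nat \<Rightarrow> nat \<Rightarrow> (nat \<Rightarrow> nat) \<Rightarrow> nat \<Rightarrow> (nat \<Rightarrow> nat) \<Rightarrow> (nat \<Rightarrow> nat)
     \<Rightarrow> (nat \<Rightarrow> (nat \<Rightarrow> real) set) \<Rightarrow> (nat \<Rightarrow> nat \<Rightarrow> nat \<Rightarrow> real)
     \<Rightarrow> (widx \<Rightarrow> real) \<Rightarrow> (widx \<Rightarrow> real) set" where
  "Abar N M n m etl ehd \<Omega> A W =
     {W'. \<exists>v \<in> normal_cone (PI N n) (OmegaP N n \<Omega>) (Rx N n W).
        W' = (\<lambda>idx. case idx of
            Lam j r \<Rightarrow> if j < N \<and> r < m then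
                 - (\<Sum>l<M. Vinc etl ehd j l * W (Zed l r)) - (\<Sum>k<n j. A j r k * W (Xe j j k))
               else 0
          | Zed l r \<Rightarrow> if l < M \<and> r < m then (\<Sum>j<N. Vinc etl ehd j l * W (Lam j r)) else 0
          | Xe j i k \<Rightarrow> if j < N \<and> i = j \<and> k < n j then
                 v (j, k) + (\<Sum>r<m. A j r k * W (Lam j r))
               else 0)}"

definition Bbar :: "nat \<Rightarrow> nat \<Rightarrow> (nat \<Rightarrow> nat) \<Rightarrow> nat \<Rightarrow> (nat \<Rightarrow> nat) \<Rightarrow> (nat \<Rightarrow> nat)
     \<Rightarrow> (nat \<Rightarrow> nat \<Rightarrow> real) \<Rightarrow> (nat \<Rightarrow> (nat \<times> nat \<Rightarrow> real) \<Rightarrow> (nat \<Rightarrow> real))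
     \<Rightarrow> (widx \<Rightarrow> real) \<Rightarrow> (widx \<Rightarrow> real)" where
  "Bbar N M n m etl ehd b g W = (\<lambda>idx. case idx of
       Lam j r \<Rightarrow> if j < N \<and> r < m then b j r else 0
     | Zed l r \<Rightarrow> 0
     | Xe j i k \<Rightarrow> if j < N \<and> i < N \<and> k < n i then
          RT N n (FF N n g (xpart W)) (j, i, k) + (\<Sum>j'<N. Lap M etl ehd j j' * W (Xe j' i k))
        else 0)"

end

theory Submission
  imports Defs
begin


lemma ip_sub_left: "ip I (vsub a b) c = ip I a c - ip I b c"
  by (simp add: ip_def vsub_def sum_subtractf left_diff_distrib)
lemma ip_sub_right: "ip I c (vsub a b) = ip I c a - ip I c b"
  by (simp add: ip_def vsub_def sum_subtractf right_diff_distrib)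
lemma ip_comm: "ip I a b = ip I b a"
  by (simp add: ip_def mult.commute)
lemma ip_self_nonneg: "ip I a a \<ge> 0"
  by (simp add: ip_def sum_nonneg)

lemma ip_self_zero:
  assumes "finite I" "ip I a a = 0" shows "\<forall>k\<in>I. a k = 0"
  using assms unfolding ip_def by (simp add: sum_nonneg_eq_0_iff)

lemma closed_space: "closed (space I)"
proof -
  have "space I = (\<Inter>k\<in>-I. {u. u k = 0})" unfolding space_def by auto
  moreover have "closed {u::'a\<Rightarrow>real. u k = 0}" for k
    by (rule closed_Collect_eq) (auto intro: continuous_on_product_coordinates)
  ultimately show ?thesis by auto
qed

lemma compact_box:
  fixes S :: "'a \<Rightarrow> real set"
  assumes "\<And>k. compact (S k)"
  shows "compact (PiE UNIV S)"
proof -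
  have "compactin (product_topology (\<lambda>i. euclidean) UNIV) (PiE UNIV S)"
    using assms by (simp add: compactin_PiE)
  then show ?thesis by (simp add: euclidean_product_topology)
qed

lemma cont_ip_dist: "continuous_on UNIV (\<lambda>y::'a\<Rightarrow>real. ip I (vsub z y) (vsub z y))"
  unfolding ip_def vsub_def
  by (intro continuous_intros continuous_on_product_coordinates)


lemma proj_min:
  fixes C :: "('a \<Rightarrow> real) set"
  assumes fin: "finite I" and CS: "C \<subseteq> space I" and cl: "closed C" and ne: "C \<noteq> {}"
  shows "\<exists>q\<in>C. \<forall>y\<in>C. ip I (vsub z q) (vsub z q) \<le> ip I (vsub z y) (vsub z y)"
proof -
  define \<phi> where "\<phi> y = ip I (vsub z y) (vsub z y)" for y
  obtain c0 where c0: "c0 \<in> C" using ne by auto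
  define r where "r = \<phi> c0"
  define S where "S k = (if k \<in> I then {z k - sqrt r .. z k + sqrt r} else {0::real})" for k
  have coord: "(z k - y k)^2 \<le> \<phi> y" if "k \<in> I" for k y
  proof -
    have "(z k - y k)^2 = (\<lambda>k. (z k - y k) * (z k - y k)) k" by (simp add: power2_eq_square)
    also have "\<dots> \<le> (\<Sum>k\<in>I. (z k - y k) * (z k - y k))"
      by (rule member_le_sum) (use that fin in auto)
    finally show ?thesis by (simp add: \<phi>_def ip_def vsub_def)
  qed
  have inB: "y \<in> PiE UNIV S" if "y \<in> C" "\<phi> y \<le> r" for y
  proof -
    have "y k \<in> S k" for k
    proof (cases "k \<in> I")
      case True
      have "(z k - y k)^2 \<le> r" using coord[OF True, of y] that by linarith
      hence "\<bar>z k - y k\<bar> \<le> sqrt r" using real_sqrt_le_mono by fastforce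
      then show ?thesis using True by (auto simp: S_def abs_le_iff)
    next
      case False
      then show ?thesis using that CS by (auto simp: S_def space_def)
    qed
    then show ?thesis by auto
  qed
  have cK: "compact (PiE UNIV S \<inter> C)"
    by (rule compact_Int_closed[OF compact_box cl]) (auto simp: S_def)
  have neK: "PiE UNIV S \<inter> C \<noteq> {}" using inB[OF c0] c0 by (auto simp: r_def)
  obtain q where q: "q \<in> PiE UNIV S \<inter> C" and qmin: "\<forall>y\<in>PiE UNIV S \<inter> C. \<phi> q \<le> \<phi> y"
    using continuous_attains_inf[OF cK neK, of \<phi>] cont_ip_dist[of I z]
    by (auto simp: \<phi>_def intro: continuous_on_subset)
  have "\<phi> q \<le> \<phi> y" if "y \<in> C" for y
  proof (cases "\<phi> y \<le> r")
    case True then show ?thesis using qmin inB that by auto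
  next
    case False
    have "\<phi> q \<le> \<phi> c0" using qmin inB[OF c0] c0 by (auto simp: r_def)
    then show ?thesis using False by (simp add: r_def)
  qed
  then show ?thesis using q unfolding \<phi>_def by auto
qed


lemma proj_var:
  fixes C :: "('a \<Rightarrow> real) set"
  assumes fin: "finite I" and CS: "C \<subseteq> space I" and cl: "closed C" and ne: "C \<noteq> {}"
    and cv: "convex_set I C"
  shows "\<exists>q\<in>C. \<forall>y\<in>C. ip I (vsub z q) (vsub y q) \<le> 0"
proof -
  obtain q where qC: "q \<in> C" and qmin: "\<forall>y\<in>C. ip I (vsub z q) (vsub z q) \<le> ip I (vsub z y) (vsub z y)"
    using proj_min[OF fin CS cl ne] by blast
  have "ip I (vsub z q) (vsub y q) \<le> 0" if yC: "y \<in> C" for y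
  proof (rule ccontr)
    assume "\<not> ?thesis"
    hence a: "ip I (vsub z q) (vsub y q) > 0" by simp
    define a' where "a' = ip I (vsub z q) (vsub y q)"
    define B where "B = ip I (vsub y q) (vsub y q)"
    have B0: "B \<ge> 0" by (simp add: B_def ip_self_nonneg)
    define t where "t = (if B \<le> a' then 1 else a' / B)"
    have t0: "0 < t" "t \<le> 1" "t * B \<le> a'" using a B0
      by (auto simp: t_def a'_def field_simps)
    define yt where "yt = (\<lambda>k. (1 - t) * q k + t * y k)"
    have ytC: "yt \<in> C" using cv qC yC t0 unfolding convex_set_def yt_def by auto
    have exp: "ip I (vsub z yt) (vsub z yt) = ip I (vsub z q) (vsub z q) - 2 * t * a' + t^2 * B"
    proof -
      have pt: "(z k - yt k) * (z k - yt k) = (z k - q k) * (z k - q k) - 2 * t * ((z k - q k) * (y k - q k)) + t^2 * ((y k - q k) * (y k - q k))" for k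
        unfolding yt_def by (simp add: power2_eq_square algebra_simps)
      show ?thesis unfolding ip_def vsub_def a'_def B_def
        by (simp only: pt sum.distrib sum_subtractf sum_distrib_left[symmetric])
    qed
    have "t^2 * B \<le> t * a'" using t0 by (simp add: power2_eq_square mult.assoc mult_left_mono)
    hence "ip I (vsub z yt) (vsub z yt) < ip I (vsub z q) (vsub z q)"
    proof -
      have "t * a' > 0" using t0 a unfolding a'_def by simp
      then show ?thesis using exp \<open>t^2 * B \<le> t * a'\<close> by linarith
    qed
    then show False using qmin ytC by fastforce
  qed
  then show ?thesis using qC by blast
qed

lemma nc_max:
  fixes C :: "('a \<Rightarrow> real) set"
  assumes fin: "finite I" and CS: "C \<subseteq> space I" and cl: "closed C" and ne: "C \<noteq> {}"
    and cv: "convex_set I C" and p: "p \<in> space I" and w: "w \<in> space I"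
    and K: "\<forall>y\<in>C. \<forall>w'\<in>normal_cone I C y. ip I (vsub p y) (vsub w w') \<ge> 0"
  shows "p \<in> C \<and> w \<in> normal_cone I C p"
proof -
  define z where "z = (\<lambda>k. p k + w k)"
  obtain q where qC: "q \<in> C" and qv: "\<forall>y\<in>C. ip I (vsub z q) (vsub y q) \<le> 0"
    using proj_var[OF fin CS cl ne cv] by blast
  have qs: "q \<in> space I" using qC CS by auto
  have zs: "vsub z q \<in> space I" using p w qs by (auto simp: space_def vsub_def z_def)
  have "vsub z q \<in> normal_cone I C q" unfolding normal_cone_def using qC zs qv
    by (auto simp: ip_comm)
  hence "ip I (vsub p q) (vsub w (vsub z q)) \<ge> 0" using K qC by blast
  moreover have "vsub w (vsub z q) = (\<lambda>k. - (vsub p q k))" by (auto simp: vsub_def z_def)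
  ultimately have "ip I (vsub p q) (vsub p q) \<le> 0" by (simp add: ip_def sum_negf)
  hence "ip I (vsub p q) (vsub p q) = 0" using ip_self_nonneg by (metis order_antisym)
  hence "\<forall>k\<in>I. vsub p q k = 0" using ip_self_zero[OF fin] by blast
  hence "\<forall>k\<in>I. p k = q k" by (simp add: vsub_def)
  hence pq: "p = q" using p qs by (auto simp: space_def fun_eq_iff)
  have "w = vsub z q" using pq by (auto simp: vsub_def z_def)
  then show ?thesis using pq qC \<open>vsub z q \<in> normal_cone I C q\<close> by simp
qed




lemma Vinc_cases: "Vinc etl ehd j l \<in> {-1, 0, 1}"
  by (auto simp: Vinc_def)

lemma Vinc_sq_sum:
  assumes g: "graph_ok N M etl ehd" and l: "l < M"
  shows "(\<Sum>j<N. (Vinc etl ehd j l)^2) = 2"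
proof -
  have h: "etl l < N" "ehd l < N" "etl l \<noteq> ehd l" using g l by (auto simp: graph_ok_def)
  have "(\<Sum>j<N. (Vinc etl ehd j l)^2) = (\<Sum>j<N. (if j = ehd l then 1 else 0) + (if j = etl l then 1 else 0))"
    by (rule sum.cong) (use h in \<open>auto simp: Vinc_def\<close>)
  also have "\<dots> = 2" using h by (simp add: sum.distrib)
  finally show ?thesis .
qed

lemma lap_bound:
  assumes g: "graph_ok N M etl ehd" and d: "\<forall>j<N. Lap M etl ehd j j \<le> d"
  shows "(\<Sum>j<N. (\<Sum>j'<N. Lap M etl ehd j j' * y j')^2)
         \<le> 2 * d * (\<Sum>j<N. y j * (\<Sum>j'<N. Lap M etl ehd j j' * y j'))"
proof -
  define V where "V = Vinc etl ehd"
  define z where "z l = (\<Sum>j'<N. V j' l * y j')" for l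
  have V3: "V j l ^ 3 = V j l" "V j l ^ 4 = (V j l)^2" for j l
    using Vinc_cases[of etl ehd j l] by (auto simp: V_def)
  have e1: "(\<Sum>j'<N. Lap M etl ehd j j' * y j') = (\<Sum>l<M. V j l * z l)" for j
    unfolding Lap_def z_def V_def
    by (simp add: sum_distrib_left sum_distrib_right mult.assoc) (rule sum.swap)
  have e2: "(\<Sum>j<N. y j * (\<Sum>l<M. V j l * z l)) = (\<Sum>l<M. (z l)^2)"
  proof -
    have "(\<Sum>j<N. y j * (\<Sum>l<M. V j l * z l)) = (\<Sum>j<N. \<Sum>l<M. y j * V j l * z l)"
      by (simp add: sum_distrib_left mult.assoc)
    also have "\<dots> = (\<Sum>l<M. \<Sum>j<N. y j * V j l * z l)" by (rule sum.swap)
    also have "\<dots> = (\<Sum>l<M. z l * z l)"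
      by (simp add: z_def sum_distrib_right mult.commute mult.left_commute)
    finally show ?thesis by (simp add: power2_eq_square)
  qed
  have dd: "Lap M etl ehd j j = (\<Sum>l<M. (V j l)^2)" for j
    by (simp add: Lap_def V_def power2_eq_square)
  have e3: "(\<Sum>l<M. V j l * z l)^2 \<le> (\<Sum>l<M. (V j l)^2) * (\<Sum>l<M. (V j l)^2 * (z l)^2)" for j
  proof -
    have "(\<Sum>l<M. V j l * z l) = (\<Sum>l<M. (V j l)^2 * (V j l * z l))"
    proof (rule sum.cong)
      fix l
      have "(V j l)^2 * (V j l * z l) = V j l ^ 3 * z l" by (simp add: power2_eq_square power3_eq_cube)
      then show "V j l * z l = (V j l)^2 * (V j l * z l)" using V3(1) by simp
    qed simp
    also have "(\<dots>)^2 \<le> (\<Sum>l<M. ((V j l)^2)^2) * (\<Sum>l<M. (V j l * z l)^2)"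
      by (rule Cauchy_Schwarz_ineq_sum)
    also have "\<dots> = (\<Sum>l<M. (V j l)^2) * (\<Sum>l<M. (V j l)^2 * (z l)^2)"
    proof -
      have "((V j l)^2)^2 = (V j l)^2" for l using V3(2)[of j l] by (simp flip: power_mult)
      moreover have "(V j l * z l)^2 = (V j l)^2 * (z l)^2" for l by (simp add: power_mult_distrib)
      ultimately show ?thesis by simp
    qed
    finally show ?thesis .
  qed
  have d0: "0 \<le> (\<Sum>l<M. (V j l)^2 * (z l)^2)" for j by (simp add: sum_nonneg)
  have "(\<Sum>j<N. (\<Sum>j'<N. Lap M etl ehd j j' * y j')^2) \<le> (\<Sum>j<N. d * (\<Sum>l<M. (V j l)^2 * (z l)^2))"
  proof (rule sum_mono)
    fix j assume j: "j \<in> {..<N}"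
    have "(\<Sum>j'<N. Lap M etl ehd j j' * y j')^2 \<le> (\<Sum>l<M. (V j l)^2) * (\<Sum>l<M. (V j l)^2 * (z l)^2)"
      using e1 e3 by simp
    also have "\<dots> \<le> d * (\<Sum>l<M. (V j l)^2 * (z l)^2)"
      using d j dd d0 by (intro mult_right_mono) auto
    finally show "(\<Sum>j'<N. Lap M etl ehd j j' * y j')^2 \<le> d * (\<Sum>l<M. (V j l)^2 * (z l)^2)" .
  qed
  also have "\<dots> = d * (\<Sum>l<M. (z l)^2 * (\<Sum>j<N. (V j l)^2))"
    by (simp add: sum_distrib_left sum_distrib_right mult.commute mult.left_commute) (rule sum.swap)
  also have "\<dots> = d * (\<Sum>l<M. (z l)^2 * 2)"
    using Vinc_sq_sum[OF g] by (simp add: V_def)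
  also have "\<dots> = 2 * d * (\<Sum>l<M. (z l)^2)" by (simp add: sum_distrib_left mult.assoc mult.commute mult.left_commute)
  also have "\<dots> = 2 * d * (\<Sum>j<N. y j * (\<Sum>j'<N. Lap M etl ehd j j' * y j'))"
    using e1 e2 by simp
  finally show ?thesis .
qed




lemma sum_PI: "sum h (PI N n) = (\<Sum>i<N. \<Sum>k<n i. h (i, k))"
proof -
  have "PI N n = Sigma {..<N} (\<lambda>i. {..<n i})" by (auto simp: PI_def)
  then show ?thesis by (simp add: sum.Sigma)
qed

lemma sum_XI: "sum h (XI N n) = (\<Sum>j<N. \<Sum>i<N. \<Sum>k<n i. h (j, i, k))"
proof -
  have "XI N n = Sigma {..<N} (\<lambda>j. Sigma {..<N} (\<lambda>i. {..<n i}))" by (auto simp: XI_def)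
  then show ?thesis by (simp add: sum.Sigma)
qed

lemma finite_PI: "finite (PI N n)"
proof -
  have "PI N n = Sigma {..<N} (\<lambda>i. {..<n i})" by (auto simp: PI_def)
  then show ?thesis by simp
qed

lemma finite_XI: "finite (XI N n)"
proof -
  have "XI N n = Sigma {..<N} (\<lambda>j. Sigma {..<N} (\<lambda>i. {..<n i}))" by (auto simp: XI_def)
  then show ?thesis by simp
qed

lemma WI_eq: "WI N M n m = (\<lambda>(j,r). Lam j r) ` ({..<N} \<times> {..<m}) \<union> (\<lambda>(l,r). Zed l r) ` ({..<M} \<times> {..<m})
   \<union> (\<lambda>(j,i,k). Xe j i k) ` (XI N n)"
  by (auto simp: WI_def XI_def image_iff)

lemma finite_WI: "finite (WI N M n m)"
  by (simp add: WI_eq finite_XI)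

lemma sum_WI: "sum h (WI N M n m) = (\<Sum>j<N. \<Sum>r<m. h (Lam j r)) + (\<Sum>l<M. \<Sum>r<m. h (Zed l r))
   + (\<Sum>j<N. \<Sum>i<N. \<Sum>k<n i. h (Xe j i k))"
proof -
  have i1: "inj_on (\<lambda>(j,r). Lam j r) X" for X by (auto simp: inj_on_def)
  have i2: "inj_on (\<lambda>(j,r). Zed j r) X" for X by (auto simp: inj_on_def)
  have i3: "inj_on (\<lambda>(j,i,k). Xe j i k) X" for X by (auto simp: inj_on_def)
  have "sum h (WI N M n m) = sum h ((\<lambda>(j,r). Lam j r) ` ({..<N} \<times> {..<m}) \<union> (\<lambda>(l,r). Zed l r) ` ({..<M} \<times> {..<m}))
      + sum h ((\<lambda>(j,i,k). Xe j i k) ` (XI N n))"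
    unfolding WI_eq by (rule sum.union_disjoint) (auto simp: finite_XI)
  also have "sum h ((\<lambda>(j,r). Lam j r) ` ({..<N} \<times> {..<m}) \<union> (\<lambda>(l,r). Zed l r) ` ({..<M} \<times> {..<m}))
     = sum h ((\<lambda>(j,r). Lam j r) ` ({..<N} \<times> {..<m})) + sum h ((\<lambda>(l,r). Zed l r) ` ({..<M} \<times> {..<m}))"
    by (rule sum.union_disjoint) auto
  also have "sum h ((\<lambda>(j,r). Lam j r) ` ({..<N} \<times> {..<m})) = (\<Sum>j<N. \<Sum>r<m. h (Lam j r))"
    by (subst sum.reindex[OF i1]) (simp add: sum.cartesian_product comp_def case_prod_unfold)
  also have "sum h ((\<lambda>(j,r). Zed j r) ` ({..<M} \<times> {..<m})) = (\<Sum>j<M. \<Sum>r<m. h (Zed j r))"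
    by (subst sum.reindex[OF i2]) (simp add: sum.cartesian_product comp_def case_prod_unfold)
  also have "sum h ((\<lambda>(j,i,k). Xe j i k) ` (XI N n)) = (\<Sum>j<N. \<Sum>i<N. \<Sum>k<n i. h (Xe j i k))"
    by (subst sum.reindex[OF i3]) (simp add: sum_XI comp_def case_prod_unfold)
  finally show ?thesis .
qed

lemma collapse:
  fixes N j :: nat and n :: "nat \<Rightarrow> nat"
  assumes "j < N" "\<And>i k. i \<noteq> j \<Longrightarrow> G i k = 0"
  shows "(\<Sum>i<N. \<Sum>k<n i. G i k) = (\<Sum>k<n j. G j k)"
proof -
  have z: "(\<Sum>i\<in>{..<N} - {j}. \<Sum>k<n i. G i k) = 0" using assms(2) by simp
  have "(\<Sum>i<N. \<Sum>k<n i. G i k) = (\<Sum>k<n j. G j k) + (\<Sum>i\<in>{..<N} - {j}. \<Sum>k<n i. G i k)"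
    by (rule sum.remove) (use assms(1) in auto)
  then show ?thesis using z by simp
qed

lemma swap3: "(\<Sum>j\<in>J. \<Sum>r\<in>R. \<Sum>l\<in>L. F j r l) = (\<Sum>l\<in>L. \<Sum>r\<in>R. \<Sum>j\<in>J. F j r l)"
proof -
  have "(\<Sum>j\<in>J. \<Sum>r\<in>R. \<Sum>l\<in>L. F j r l) = (\<Sum>r\<in>R. \<Sum>j\<in>J. \<Sum>l\<in>L. F j r l)" by (rule sum.swap)
  also have "\<dots> = (\<Sum>r\<in>R. \<Sum>l\<in>L. \<Sum>j\<in>J. F j r l)" by (simp add: sum.swap[of _ J])
  also have "\<dots> = (\<Sum>l\<in>L. \<Sum>r\<in>R. \<Sum>j\<in>J. F j r l)" by (rule sum.swap)
  finally show ?thesis .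
qed




definition Sop where "Sop N M n m etl ehd A W = (\<lambda>idx. case idx of
    Lam j r \<Rightarrow> if j < N \<and> r < m then
         - (\<Sum>l<M. Vinc etl ehd j l * W (Zed l r)) - (\<Sum>k<n j. A j r k * W (Xe j j k)) else 0
  | Zed l r \<Rightarrow> if l < M \<and> r < m then (\<Sum>j<N. Vinc etl ehd j l * W (Lam j r)) else 0
  | Xe j i k \<Rightarrow> if j < N \<and> i = j \<and> k < n j then (\<Sum>r<m. A j r k * W (Lam j r)) else 0)"

definition Nc where "Nc N n v = (\<lambda>idx. case idx of
    Xe j i k \<Rightarrow> if j < N \<and> i = j \<and> k < n j then v (j, k) else 0 | _ \<Rightarrow> 0)"

lemma Abar_eq: "Abar N M n m etl ehd \<Omega> A W =
  {W'. \<exists>v\<in>normal_cone (PI N n) (OmegaP N n \<Omega>) (Rx N n W). W' = (\<lambda>idx. Sop N M n m etl ehd A W idx + Nc N n v idx)}"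
proof -
  have "(\<lambda>idx. case idx of
            Lam j r \<Rightarrow> if j < N \<and> r < m then
                 - (\<Sum>l<M. Vinc etl ehd j l * W (Zed l r)) - (\<Sum>k<n j. A j r k * W (Xe j j k))
               else 0
          | Zed l r \<Rightarrow> if l < M \<and> r < m then (\<Sum>j<N. Vinc etl ehd j l * W (Lam j r)) else 0
          | Xe j i k \<Rightarrow> if j < N \<and> i = j \<and> k < n j then
                 v (j, k) + (\<Sum>r<m. A j r k * W (Lam j r))
               else 0) = (\<lambda>idx. Sop N M n m etl ehd A W idx + Nc N n v idx)" for v
    by (rule ext, case_tac idx) (auto simp: Sop_def Nc_def)
  then show ?thesis unfolding Abar_def by simp
qed

lemma Sop_lin: "Sop N M n m etl ehd A (vsub u v) = vsub (Sop N M n m etl ehd A u) (Sop N M n m etl ehd A v)"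
  by (rule ext, case_tac x)
     (auto simp: Sop_def vsub_def sum_subtractf right_diff_distrib)

lemma Rx_sub: "Rx N n (vsub u v) = vsub (Rx N n u) (Rx N n v)"
  by (auto simp: Rx_def vsub_def fun_eq_iff)

lemma Sop_space: "Sop N M n m etl ehd A W \<in> space (WI N M n m)"
  unfolding space_def
  by (auto simp: Sop_def WI_def split: widx.splits)

lemma Nc_space: "Nc N n v \<in> space (WI N M n m)"
  unfolding space_def
  by (auto simp: Nc_def WI_def split: widx.splits)

lemma Rx_space: "Rx N n W \<in> space (PI N n)"
  by (auto simp: space_def Rx_def PI_def)

lemma Nc_ip: "ip (WI N M n m) d (Nc N n v) = ip (PI N n) (Rx N n d) v"
proof -
  have "ip (WI N M n m) d (Nc N n v) = (\<Sum>j<N. \<Sum>i<N. \<Sum>k<n i. d (Xe j i k) * (if i = j then v (j,k) else 0))"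
    unfolding ip_def sum_WI by (simp add: Nc_def) (intro sum.cong refl, auto)
  also have "\<dots> = (\<Sum>j<N. \<Sum>k<n j. d (Xe j j k) * v (j,k))"
    by (rule sum.cong[OF refl], subst collapse) auto
  also have "\<dots> = ip (PI N n) (Rx N n d) v"
    unfolding ip_def sum_PI by (simp add: Rx_def)
  finally show ?thesis .
qed

lemma Sop_skew: "ip (WI N M n m) d (Sop N M n m etl ehd A d) = 0"
proof -
  define V where "V = Vinc etl ehd"
  have X3: "(\<Sum>j<N. \<Sum>i<N. \<Sum>k<n i. d (Xe j i k) * Sop N M n m etl ehd A d (Xe j i k))
      = (\<Sum>j<N. \<Sum>k<n j. \<Sum>r<m. d (Xe j j k) * A j r k * d (Lam j r))"
    by (rule sum.cong[OF refl], subst collapse)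
       (auto simp: Sop_def sum_distrib_left mult.assoc)
  have X1: "(\<Sum>j<N. \<Sum>r<m. d (Lam j r) * Sop N M n m etl ehd A d (Lam j r))
      = - (\<Sum>j<N. \<Sum>r<m. \<Sum>l<M. d (Lam j r) * V j l * d (Zed l r))
        - (\<Sum>j<N. \<Sum>r<m. \<Sum>k<n j. d (Lam j r) * A j r k * d (Xe j j k))"
    by (simp add: Sop_def V_def sum_distrib_left right_diff_distrib sum_subtractf sum_negf mult.assoc
        flip: sum.distrib)
  have X2: "(\<Sum>l<M. \<Sum>r<m. d (Zed l r) * Sop N M n m etl ehd A d (Zed l r))
      = (\<Sum>l<M. \<Sum>r<m. \<Sum>j<N. d (Zed l r) * V j l * d (Lam j r))"
    by (simp add: Sop_def V_def sum_distrib_left mult.assoc)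
  have P: "(\<Sum>j<N. \<Sum>r<m. \<Sum>l<M. d (Lam j r) * V j l * d (Zed l r))
      = (\<Sum>l<M. \<Sum>r<m. \<Sum>j<N. d (Zed l r) * V j l * d (Lam j r))"
    by (subst swap3) (simp add: mult.commute mult.left_commute)
  have Q: "(\<Sum>j<N. \<Sum>r<m. \<Sum>k<n j. d (Lam j r) * A j r k * d (Xe j j k))
      = (\<Sum>j<N. \<Sum>k<n j. \<Sum>r<m. d (Xe j j k) * A j r k * d (Lam j r))"
    by (rule sum.cong[OF refl], subst sum.swap) (simp add: mult.commute mult.left_commute)
  show ?thesis unfolding ip_def sum_WI X1 X2 X3 P Q by simp
qed




lemma OmegaP_props:
  assumes a1: "assumption1 N n m \<Omega> A b f"
  shows "OmegaP N n \<Omega> \<subseteq> space (PI N n)" "closed (OmegaP N n \<Omega>)"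
    "convex_set (PI N n) (OmegaP N n \<Omega>)" "OmegaP N n \<Omega> \<noteq> {}"
proof -
  show "OmegaP N n \<Omega> \<subseteq> space (PI N n)" by (auto simp: OmegaP_def)
  have cb: "continuous_on UNIV (blk i)" for i
    unfolding blk_def by (intro continuous_on_coordinatewise_then_product continuous_on_product_coordinates)
  have "closed (blk i -` \<Omega> i)" if "i < N" for i
  proof -
    have "closed (\<Omega> i)" using a1 that by (auto simp: assumption1_def)
    then have "closed (blk i -` \<Omega> i \<inter> UNIV)" using cb[of i] continuous_on_closed_vimage[of UNIV "blk i"] by blast
    then show ?thesis by simp
  qed
  hence "closed (space (PI N n) \<inter> (\<Inter>i\<in>{..<N}. blk i -` \<Omega> i))"
    by (intro closed_Int closed_space closed_INT) auto
  moreover have "OmegaP N n \<Omega> = space (PI N n) \<inter> (\<Inter>i\<in>{..<N}. blk i -` \<Omega> i)"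
    by (auto simp: OmegaP_def)
  ultimately show "closed (OmegaP N n \<Omega>)" by simp
  show "convex_set (PI N n) (OmegaP N n \<Omega>)"
  proof -
    have "(\<lambda>k. (1 - t) * x k + t * y k) \<in> OmegaP N n \<Omega>"
      if xy: "x \<in> OmegaP N n \<Omega>" "y \<in> OmegaP N n \<Omega>" "0 \<le> t" "t \<le> 1" for x y t
    proof -
      have "blk i (\<lambda>k. (1 - t) * x k + t * y k) \<in> \<Omega> i" if i: "i < N" for i
      proof -
        have "convex_set {..<n i} (\<Omega> i)" using a1 i by (auto simp: assumption1_def)
        moreover have "blk i x \<in> \<Omega> i" "blk i y \<in> \<Omega> i" using xy i by (auto simp: OmegaP_def)
        ultimately have "(\<lambda>k. (1 - t) * blk i x k + t * blk i y k) \<in> \<Omega> i"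
          using \<open>0 \<le> t\<close> \<open>t \<le> 1\<close> unfolding convex_set_def by blast
        then show ?thesis by (simp add: blk_def)
      qed
      moreover have "(\<lambda>k. (1 - t) * x k + t * y k) \<in> space (PI N n)"
        using that by (auto simp: OmegaP_def space_def)
      ultimately show ?thesis by (simp add: OmegaP_def)
    qed
    moreover have "OmegaP N n \<Omega> \<subseteq> space (PI N n)" by (auto simp: OmegaP_def)
    ultimately show ?thesis unfolding convex_set_def by blast
  qed
  have "nonempty_rel_interior (Xset N n m \<Omega> A b)"
    using a1 unfolding assumption1_def by (elim conjE)
  then obtain U where "U \<noteq> {}" "U \<subseteq> Xset N n m \<Omega> A b"
    unfolding nonempty_rel_interior_def by blast
  then show "OmegaP N n \<Omega> \<noteq> {}" by (auto simp: Xset_def)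
qed

lemma nc_mono:
  assumes "v1 \<in> normal_cone I C p1" "v2 \<in> normal_cone I C p2"
  shows "ip I (vsub p1 p2) (vsub v1 v2) \<ge> 0"
proof -
  have "p1 \<in> C" "p2 \<in> C" using assms by (auto simp: normal_cone_def split: if_splits)
  then have "ip I v1 (vsub p2 p1) \<le> 0" "ip I v2 (vsub p1 p2) \<le> 0"
    using assms by (auto simp: normal_cone_def)
  moreover have "ip I (vsub p1 p2) (vsub v1 v2) = - ip I v1 (vsub p2 p1) - ip I v2 (vsub p1 p2)"
    by (simp add: ip_sub_left ip_sub_right ip_comm)
  ultimately show ?thesis by linarith
qed

lemma vsub_plus: "vsub (\<lambda>i. a i + b i) (\<lambda>i. c i + d i) = (\<lambda>i. vsub a c i + vsub b d i)"
  by (auto simp: vsub_def)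

lemma ip_add_right: "ip I x (\<lambda>i. a i + b i) = ip I x a + ip I x b"
  by (simp add: ip_def sum.distrib distrib_left)

lemma Abar_mono: "monotone_op (WI N M n m) (Abar N M n m etl ehd \<Omega> A)"
  unfolding monotone_op_def
proof (intro ballI)
  fix u v a b'
  assume "a \<in> Abar N M n m etl ehd \<Omega> A u" "b' \<in> Abar N M n m etl ehd \<Omega> A v"
  then obtain v1 v2 where v1: "v1 \<in> normal_cone (PI N n) (OmegaP N n \<Omega>) (Rx N n u)"
    and v2: "v2 \<in> normal_cone (PI N n) (OmegaP N n \<Omega>) (Rx N n v)"
    and a: "a = (\<lambda>idx. Sop N M n m etl ehd A u idx + Nc N n v1 idx)"
    and b: "b' = (\<lambda>idx. Sop N M n m etl ehd A v idx + Nc N n v2 idx)"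
    unfolding Abar_eq by blast
  have nc: "vsub (Nc N n v1) (Nc N n v2) = Nc N n (vsub v1 v2)"
    by (rule ext, case_tac x) (auto simp: Nc_def vsub_def)
  have "ip (WI N M n m) (vsub u v) (vsub a b') =
        ip (WI N M n m) (vsub u v) (Sop N M n m etl ehd A (vsub u v))
      + ip (WI N M n m) (vsub u v) (Nc N n (vsub v1 v2))"
    unfolding a b vsub_plus ip_add_right Sop_lin[symmetric] nc ..
  also have "\<dots> = ip (PI N n) (vsub (Rx N n u) (Rx N n v)) (vsub v1 v2)"
    by (simp add: Sop_skew Nc_ip Rx_sub)
  also have "\<dots> \<ge> 0" by (rule nc_mono[OF v1 v2])
  finally show "0 \<le> ip (WI N M n m) (vsub u v) (vsub a b')" .
qed


definition emb :: "(nat \<times> nat \<Rightarrow> real) \<Rightarrow> widx \<Rightarrow> real" where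
  "emb y = (\<lambda>idx. case idx of Xe j i k \<Rightarrow> if i = j then y (j, k) else 0 | _ \<Rightarrow> 0)"

lemma emb_space: "y \<in> space (PI N n) \<Longrightarrow> emb y \<in> space (WI N M n m)"
  by (auto simp: emb_def space_def WI_def PI_def split: widx.splits)

lemma Rx_emb: "y \<in> space (PI N n) \<Longrightarrow> Rx N n (emb y) = y"
  by (auto simp: emb_def space_def Rx_def PI_def fun_eq_iff)

lemma ip_delta: "e \<in> I \<Longrightarrow> finite I \<Longrightarrow> ip I (\<lambda>idx. if idx = e then t else 0) c = t * c e"
proof -
  assume e: "e \<in> I" and f: "finite I"
  have "ip I (\<lambda>idx. if idx = e then t else 0) c = (\<Sum>k\<in>I. if k = e then t * c k else 0)"
    unfolding ip_def by (rule sum.cong) auto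
  also have "\<dots> = t * c e" using e f by (simp add: sum.delta')
  finally show ?thesis .
qed

lemma Abar_max:
  assumes a1: "assumption1 N n m \<Omega> A b f"
    and u: "u \<in> space (WI N M n m)" and a: "a \<in> space (WI N M n m)"
    and H: "\<forall>v\<in>space (WI N M n m). \<forall>b\<in>Abar N M n m etl ehd \<Omega> A v.
              0 \<le> ip (WI N M n m) (vsub u v) (vsub a b)"
  shows "a \<in> Abar N M n m etl ehd \<Omega> A u"
proof -
  define S where "S = Sop N M n m etl ehd A"
  define c where "c = vsub a (S u)"
  define WW where "WW = WI N M n m"
  have finW: "finite WW" by (simp add: WW_def finite_WI)
  have K: "ip WW (vsub u v) c \<ge> ip (PI N n) (vsub (Rx N n u) (Rx N n v)) w'"
    if v: "v \<in> space WW" and w': "w' \<in> normal_cone (PI N n) (OmegaP N n \<Omega>) (Rx N n v)" for v w'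
  proof -
    have "(\<lambda>idx. S v idx + Nc N n w' idx) \<in> Abar N M n m etl ehd \<Omega> A v"
      unfolding Abar_eq S_def using w' by blast
    hence "0 \<le> ip WW (vsub u v) (vsub a (\<lambda>idx. S v idx + Nc N n w' idx))"
      using H v unfolding WW_def by blast
    also have "ip WW (vsub u v) (vsub a (\<lambda>idx. S v idx + Nc N n w' idx))
       = ip WW (vsub u v) c + ip WW (vsub u v) (vsub (S u) (S v)) - ip WW (vsub u v) (Nc N n w')"
      unfolding c_def by (simp add: ip_sub_right ip_add_right)
    also have "ip WW (vsub u v) (vsub (S u) (S v)) = 0"
      unfolding S_def WW_def Sop_lin[symmetric] by (rule Sop_skew)
    also have "ip WW (vsub u v) (Nc N n w') = ip (PI N n) (vsub (Rx N n u) (Rx N n v)) w'"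
      unfolding WW_def by (simp add: Nc_ip Rx_sub)
    finally show ?thesis by simp
  qed
  obtain p0 where p0: "p0 \<in> OmegaP N n \<Omega>" using OmegaP_props(4)[OF a1] by blast
  have p0s: "p0 \<in> space (PI N n)" using p0 OmegaP_props(1)[OF a1] by blast
  have z0: "(\<lambda>_. 0) \<in> normal_cone (PI N n) (OmegaP N n \<Omega>) p0"
    using p0 by (simp add: normal_cone_def space_def ip_def)
  have us: "\<And>k. k \<notin> WW \<Longrightarrow> u k = 0" using u by (auto simp: space_def WW_def)
  have cs: "c \<in> space WW" using a Sop_space unfolding c_def S_def WW_def space_def vsub_def by auto
  have off: "c e = 0" if e: "e \<in> WW" and nd: "\<forall>j k. e \<noteq> Xe j j k" for e
  proof (rule ccontr)
    assume ce: "c e \<noteq> 0"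
    define vb where "vb = (\<lambda>idx. case idx of Xe j i k \<Rightarrow> if i = j then p0 (j, k) else u idx | _ \<Rightarrow> u idx)"
    define X where "X = ip WW (vsub u vb) c"
    define t where "t = (X + 1) / c e"
    define vt where "vt = (\<lambda>idx. vb idx + (if idx = e then t else 0))"
    have vts: "vt \<in> space WW"
      using e us p0s unfolding vt_def vb_def space_def
      by (auto simp: WW_def WI_def PI_def split: widx.splits)
    have Rvt: "Rx N n vt = p0"
      using nd p0s unfolding vt_def vb_def by (auto simp: Rx_def space_def PI_def fun_eq_iff)
    have "ip (PI N n) (vsub (Rx N n u) (Rx N n vt)) (\<lambda>_. 0) \<le> ip WW (vsub u vt) c"
      by (rule K[OF vts]) (simp add: Rvt z0)
    hence "0 \<le> ip WW (vsub u vt) c" by (simp add: ip_def)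
    moreover have "vsub u vt = vsub (vsub u vb) (\<lambda>idx. if idx = e then t else 0)"
      by (auto simp: vsub_def vt_def)
    ultimately have "0 \<le> X - t * c e"
      by (simp add: ip_sub_left ip_delta[OF e finW] X_def)
    moreover have "t * c e = X + 1" using ce by (simp add: t_def)
    ultimately show False by simp
  qed
  define w where "w = (\<lambda>(j, k). if (j, k) \<in> PI N n then c (Xe j j k) else 0)"
  have ws: "w \<in> space (PI N n)" by (auto simp: w_def space_def)
  have cw: "c = Nc N n w"
  proof (rule ext)
    fix idx show "c idx = Nc N n w idx"
    proof (cases "idx \<in> WW")
      case False
      then have "c idx = 0" using cs by (auto simp: space_def)
      moreover have "Nc N n w idx = 0" using False Nc_space[of N n w M m] by (auto simp: space_def WW_def)
      ultimately show ?thesis by simp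
    next
      case True
      show ?thesis
      proof (cases "\<exists>j k. idx = Xe j j k")
        case True
        then obtain j k where "idx = Xe j j k" by blast
        then show ?thesis using \<open>idx \<in> WW\<close> by (auto simp: Nc_def w_def WW_def WI_def PI_def)
      next
        case False
        then have "c idx = 0" using off True by blast
        then show ?thesis using False by (auto simp: Nc_def split: widx.splits)
      qed
    qed
  qed
  have K': "\<forall>y\<in>OmegaP N n \<Omega>. \<forall>w'\<in>normal_cone (PI N n) (OmegaP N n \<Omega>) y.
      0 \<le> ip (PI N n) (vsub (Rx N n u) y) (vsub w w')"
  proof (intro ballI)
    fix y w' assume y: "y \<in> OmegaP N n \<Omega>" and w': "w' \<in> normal_cone (PI N n) (OmegaP N n \<Omega>) y"
    have ys: "y \<in> space (PI N n)" using y OmegaP_props(1)[OF a1] by blast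
    have "ip (PI N n) (vsub (Rx N n u) y) w' \<le> ip WW (vsub u (emb y)) c"
      using K[OF emb_space[OF ys, of M m, folded WW_def]] w' by (simp add: Rx_emb[OF ys])
    also have "ip WW (vsub u (emb y)) c = ip (PI N n) (vsub (Rx N n u) y) w"
      unfolding cw WW_def by (simp add: Nc_ip Rx_sub Rx_emb[OF ys])
    finally show "0 \<le> ip (PI N n) (vsub (Rx N n u) y) (vsub w w')" by (simp add: ip_sub_right)
  qed
  have "Rx N n u \<in> OmegaP N n \<Omega> \<and> w \<in> normal_cone (PI N n) (OmegaP N n \<Omega>) (Rx N n u)"
    by (rule nc_max[OF finite_PI OmegaP_props(1,2)[OF a1] OmegaP_props(4)[OF a1] OmegaP_props(3)[OF a1] Rx_space ws K'])
  moreover have "a = (\<lambda>idx. S u idx + Nc N n w idx)"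
  proof (rule ext)
    fix x
    have "a x - S u x = Nc N n w x" using fun_cong[OF cw, of x] unfolding c_def vsub_def by simp
    then show "a x = S u x + Nc N n w x" by linarith
  qed
  ultimately show ?thesis unfolding Abar_eq S_def by blast
qed




lemma reord: "(\<Sum>j<N. \<Sum>i<N. \<Sum>k<n i. F j i k) = (\<Sum>i<N. \<Sum>k<(n i::nat). \<Sum>j<(N::nat). F j i k)"
proof -
  have "(\<Sum>j<N. \<Sum>i<N. \<Sum>k<n i. F j i k) = (\<Sum>i<N. \<Sum>j<N. \<Sum>k<n i. F j i k)" by (rule sum.swap)
  also have "\<dots> = (\<Sum>i<N. \<Sum>k<n i. \<Sum>j<N. F j i k)" by (rule sum.cong[OF refl], rule sum.swap)
  finally show ?thesis .
qed

lemma dstar_facts: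
  assumes "N \<ge> 1"
  shows "\<forall>j<N. Lap M etl ehd j j \<le> dstar N M etl ehd" "dstar N M etl ehd \<ge> 0"
proof -
  have eq: "{Lap M etl ehd i i | i. i < N} = (\<lambda>i. Lap M etl ehd i i) ` {..<N}" by auto
  have fin: "finite {Lap M etl ehd i i | i. i < N}" unfolding eq by simp
  show le: "\<forall>j<N. Lap M etl ehd j j \<le> dstar N M etl ehd"
    unfolding dstar_def using fin by (auto intro!: Max_ge)
  have "Lap M etl ehd 0 0 \<ge> 0" by (simp add: Lap_def sum_nonneg)
  then show "dstar N M etl ehd \<ge> 0" using le assms by force
qed

lemma Bbar_coco:
  assumes N1: "N \<ge> 1" and gr: "graph_ok N M etl ehd" and a4: "assumption4 N n g chi"
    and b0: "0 < \<beta>" and bl: "\<beta> < (if dstar N M etl ehd = 0 then chi / 2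
                   else min chi (1 / (2 * dstar N M etl ehd)) / 2)"
  shows "cocoercive (WI N M n m) (Bbar N M n m etl ehd b g) \<beta>"
  unfolding cocoercive_def
proof (intro ballI)
  fix u v assume u: "u \<in> space (WI N M n m)" and v: "v \<in> space (WI N M n m)"
  define B where "B = Bbar N M n m etl ehd b g"
  define x where "x = xpart u"
  define x' where "x' = xpart v"
  define L where "L = Lap M etl ehd"
  define ds where "ds = dstar N M etl ehd"
  define a where "a = vsub (RT N n (FF N n g x)) (RT N n (FF N n g x'))"
  define dx where "dx = vsub x x'"
  define bb where "bb = (\<lambda>(j, i, k). \<Sum>j'<N. L j j' * dx (j', i, k))"
  have XW: "Xe j i k \<in> WI N M n m \<longleftrightarrow> (j, i, k) \<in> XI N n" for j i k by (auto simp: WI_def XI_def)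
  have xs: "x \<in> space (XI N n)" "x' \<in> space (XI N n)"
    using u v XW unfolding x_def x'_def space_def xpart_def by auto
  have dB: "vsub (B u) (B v) (Xe j i k) = a (j, i, k) + bb (j, i, k)"
    if "j < N" "i < N" "k < n i" for j i k
    using that by (simp add: B_def Bbar_def a_def bb_def dx_def vsub_def x_def x'_def xpart_def L_def
        sum_subtractf right_diff_distrib)
  have dLZ: "vsub (B u) (B v) (Lam j r) = 0" "vsub (B u) (B v) (Zed l r) = 0" for j r l
    by (simp_all add: B_def Bbar_def vsub_def)
  have dU: "vsub u v (Xe j i k) = dx (j, i, k)" for j i k by (simp add: dx_def vsub_def x_def x'_def xpart_def)
  have LHS: "ip (WI N M n m) (vsub u v) (vsub (B u) (B v))
      = (\<Sum>j<N. \<Sum>i<N. \<Sum>k<n i. dx (j,i,k) * a (j,i,k)) + (\<Sum>j<N. \<Sum>i<N. \<Sum>k<n i. dx (j,i,k) * bb (j,i,k))"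
    unfolding ip_def sum_WI
    by (simp add: dB dU dLZ distrib_left sum.distrib)
  have RHS: "ip (WI N M n m) (vsub (B u) (B v)) (vsub (B u) (B v))
      = (\<Sum>j<N. \<Sum>i<N. \<Sum>k<n i. (a (j,i,k) + bb (j,i,k))^2)"
    unfolding ip_def sum_WI
    by (simp add: dB dLZ power2_eq_square)
  define T1 where "T1 = (\<Sum>j<N. \<Sum>i<N. \<Sum>k<n i. dx (j,i,k) * a (j,i,k))"
  define T2 where "T2 = (\<Sum>j<N. \<Sum>i<N. \<Sum>k<n i. dx (j,i,k) * bb (j,i,k))"
  define A2 where "A2 = (\<Sum>j<N. \<Sum>i<N. \<Sum>k<n i. (a (j,i,k))^2)"
  define B2 where "B2 = (\<Sum>j<N. \<Sum>i<N. \<Sum>k<n i. (bb (j,i,k))^2)"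
  define dF where "dF = vsub (FF N n g x) (FF N n g x')"
  have T1a: "T1 \<ge> chi * ip (PI N n) dF dF"
    using a4 xs unfolding assumption4_def T1_def dF_def a_def dx_def ip_def sum_XI by blast
  have A2e: "A2 = ip (PI N n) dF dF"
  proof -
    have "A2 = (\<Sum>j<N. \<Sum>k<n j. (a (j,j,k))^2)"
      unfolding A2_def
      by (rule sum.cong[OF refl], rule collapse) (auto simp: a_def RT_def vsub_def)
    also have "\<dots> = ip (PI N n) dF dF"
      unfolding ip_def sum_PI
      by (intro sum.cong refl) (auto simp: a_def RT_def vsub_def dF_def power2_eq_square)
    finally show ?thesis .
  qed
  have A2n: "A2 \<ge> 0" unfolding A2_def by (simp add: sum_nonneg)
  have B2n: "B2 \<ge> 0" unfolding B2_def by (simp add: sum_nonneg)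
  have lapd: "B2 \<le> 2 * d * T2" if d: "\<forall>j<N. L j j \<le> d" for d
  proof -
    have "B2 = (\<Sum>i<N. \<Sum>k<n i. \<Sum>j<N. (\<Sum>j'<N. L j j' * dx (j', i, k))^2)"
      unfolding B2_def by (subst reord) (simp add: bb_def)
    also have "\<dots> \<le> (\<Sum>i<N. \<Sum>k<n i. 2 * d * (\<Sum>j<N. dx (j,i,k) * (\<Sum>j'<N. L j j' * dx (j', i, k))))"
      by (intro sum_mono lap_bound[OF gr, where d=d, folded L_def]) (use d in auto)
    also have "\<dots> = 2 * d * T2"
      unfolding T2_def by (subst reord) (simp add: bb_def sum_distrib_left)
    finally show ?thesis .
  qed
  have dsf: "\<forall>j<N. L j j \<le> ds" "ds \<ge> 0" using dstar_facts[OF N1] unfolding L_def ds_def by auto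
  have B2T: "B2 \<le> 2 * ds * T2" using lapd dsf by blast
  have B2T': "B2 \<le> 2 * (ds + 1) * T2"
  proof (rule lapd)
    show "\<forall>j<N. L j j \<le> ds + 1" using dsf(1) by force
  qed
  have T2n: "T2 \<ge> 0"
  proof -
    have "0 \<le> 2 * (ds + 1) * T2" using B2T' B2n by linarith
    then show ?thesis using dsf(2) by (simp add: zero_le_mult_iff)
  qed
  have S2: "(\<Sum>j<N. \<Sum>i<N. \<Sum>k<n i. (a (j,i,k) + bb (j,i,k))^2) \<le> 2 * A2 + 2 * B2"
  proof -
    have "(\<Sum>j<N. \<Sum>i<N. \<Sum>k<n i. (a (j,i,k) + bb (j,i,k))^2)
        \<le> (\<Sum>j<N. \<Sum>i<N. \<Sum>k<n i. 2 * (a (j,i,k))^2 + 2 * (bb (j,i,k))^2)"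
    proof (intro sum_mono)
      fix j i k
      have "0 \<le> (a (j,i,k) - bb (j,i,k))^2" by simp
      then show "(a (j,i,k) + bb (j,i,k))^2 \<le> 2 * (a (j,i,k))^2 + 2 * (bb (j,i,k))^2"
        by (simp add: power2_eq_square algebra_simps)
    qed
    also have "\<dots> = 2 * A2 + 2 * B2"
      unfolding A2_def B2_def by (simp add: sum.distrib sum_distrib_left)
    finally show ?thesis .
  qed
  have key: "\<beta> * (2 * A2 + 2 * B2) \<le> T1 + T2"
  proof (cases "ds = 0")
    case True
    then have "B2 = 0" using B2T B2n by simp
    moreover have "2 * \<beta> \<le> chi" using bl True by (simp add: ds_def)
    hence "2 * \<beta> * A2 \<le> chi * A2" using A2n by (rule mult_right_mono)
    ultimately show ?thesis using T1a A2e T2n by (simp add: algebra_simps)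
  next
    case False
    then have dp: "ds > 0" using dsf by simp
    have "2 * \<beta> \<le> chi" "2 * \<beta> \<le> 1 / (2 * ds)" using bl False by (auto simp: ds_def)
    have "2 * \<beta> * A2 \<le> chi * A2" using \<open>2 * \<beta> \<le> chi\<close> A2n by (rule mult_right_mono)
    moreover have "2 * \<beta> * B2 \<le> T2"
    proof -
      have "2 * \<beta> * B2 \<le> 2 * \<beta> * (2 * ds * T2)" using B2T b0 by (intro mult_left_mono) auto
      also have "\<dots> = (2 * \<beta> * (2 * ds)) * T2" by simp
      also have "2 * \<beta> * (2 * ds) \<le> 1" using \<open>2 * \<beta> \<le> 1 / (2 * ds)\<close> dp by (simp add: field_simps)
      hence "(2 * \<beta> * (2 * ds)) * T2 \<le> 1 * T2" using T2n by (rule mult_right_mono)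
      finally show ?thesis by simp
    qed
    ultimately show ?thesis using T1a A2e by (simp add: algebra_simps)
  qed
  have "\<beta> * ip (WI N M n m) (vsub (B u) (B v)) (vsub (B u) (B v)) \<le> \<beta> * (2 * A2 + 2 * B2)"
    unfolding RHS using S2 b0 by simp
  also have "\<dots> \<le> ip (WI N M n m) (vsub u v) (vsub (B u) (B v))"
    unfolding LHS T1_def[symmetric] T2_def[symmetric] by (rule key)
  finally show "\<beta> * ip (WI N M n m) (vsub (Bbar N M n m etl ehd b g u) (Bbar N M n m etl ehd b g v))
          (vsub (Bbar N M n m etl ehd b g u) (Bbar N M n m etl ehd b g v))
        \<le> ip (WI N M n m) (vsub u v) (vsub (Bbar N M n m etl ehd b g u) (Bbar N M n m etl ehd b g v))"
    unfolding B_def .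
qed


theorem lemma3:
  fixes N M m :: nat and n :: "nat \<Rightarrow> nat"
    and \<Omega> :: "nat \<Rightarrow> (nat \<Rightarrow> real) set"
    and A :: "nat \<Rightarrow> nat \<Rightarrow> nat \<Rightarrow> real" and b :: "nat \<Rightarrow> nat \<Rightarrow> real"
    and f :: "nat \<Rightarrow> (nat \<times> nat \<Rightarrow> real) \<Rightarrow> real"
    and g :: "nat \<Rightarrow> (nat \<times> nat \<Rightarrow> real) \<Rightarrow> (nat \<Rightarrow> real)"
    and etl ehd :: "nat \<Rightarrow> nat" and chi :: real
  assumes "N \<ge> 1"
    and "graph_ok N M etl ehd"
    and "partial_gradients N n f g"
    and "assumption1 N n m \<Omega> A b f"
    and "assumption4 N n g chi"
  shows "maximally_monotone (WI N M n m) (Abar N M n m etl ehd \<Omega> A)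
       \<and> (\<forall>\<beta>. 0 < \<beta> \<and>
             \<beta> < (if dstar N M etl ehd = 0 then chi / 2
                   else min chi (1 / (2 * dstar N M etl ehd)) / 2)
           \<longrightarrow> cocoercive (WI N M n m) (Bbar N M n m etl ehd b g) \<beta>)"
proof -
  have sp: "Abar N M n m etl ehd \<Omega> A u \<subseteq> space (WI N M n m)" for u
  proof
    fix a assume "a \<in> Abar N M n m etl ehd \<Omega> A u"
    then obtain v where "a = (\<lambda>idx. Sop N M n m etl ehd A u idx + Nc N n v idx)"
      unfolding Abar_eq by blast
    then show "a \<in> space (WI N M n m)"
      using Sop_space[of N M n m etl ehd A u] Nc_space[of N n v M m] by (auto simp: space_def)
  qed
  have "maximally_monotone (WI N M n m) (Abar N M n m etl ehd \<Omega> A)"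
    unfolding maximally_monotone_def
    using sp Abar_mono Abar_max[OF assms(4)] by blast
  then show ?thesis using Bbar_coco[OF assms(1) assms(2) assms(5)] by blast
qed

end
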